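(* For integers $0\le d\le r<\min\{m,n\}$ with $d\le\min\{m,n\}-r-1$, there is an isomorphism of $\mathfrak{S}_n\times\mathfrak{S}_m$-modules $R(\mathcal{Z}_{n,m,r})_d\cong R(\mathcal{Z}_{n,m,r+1})_d$.
   Context: Fix positive integers $n,m$. $\mathbb{C}[\mathbf{x}_{n\times m}]$ is the polynomial ring in variables $x_{i,j}$; $\mathfrak{S}_n\times\mathfrak{S}_m$ acts by $(g,h)\cdot x_{i,j}=x_{g(i),h(j)}$. For finite stable $\mathcal{Z}\subseteq\mathrm{Mat}_{n\times m}(\mathbb{C})$, $R(\mathcal{Z})=\mathbb{C}[\mathbf{x}_{n\times m}]/\mathrm{gr}\,\mathbf{I}(\mathcal{Z})$, where $\mathbf{I}(\mathcal{Z})$ is the vanishing ideal and $\mathrm{gr}\,\mathbf{I}(\mathcal{Z})$ the ideal generated by top-degree homogeneous components of its nonzero elements; $R(\mathcal{Z})_d$ is its degree-$d$ component. $\mathcal{Z}_{n,m,r}$ is the set of $n\times m$ $0/1$ matrices with exactly $r$ ones and at most one $1$ in each row and column. *)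

theory Defs
  imports Complex_Main "HOL-Library.Poly_Mapping" "HOL-Combinatorics.Permutations"
begin

text \<open>Polynomials in the variables x_(i,j) over the complex numbers, represented as
  finitely supported maps from monomials (finitely supported exponent vectors indexed by
  variable positions (i,j)) to coefficients.\<close>

type_synonym mono = "(nat \<times> nat) \<Rightarrow>\<^sub>0 nat"
type_synonym cpoly = "mono \<Rightarrow>\<^sub>0 complex"

definition vars :: "cpoly \<Rightarrow> (nat \<times> nat) set" where
  "vars p = (\<Union>t\<in>Poly_Mapping.keys p. Poly_Mapping.keys t)"

definition polyring :: "nat \<Rightarrow> nat \<Rightarrow> cpoly set" where
  "polyring n m = {p. vars p \<subseteq> {..<n} \<times> {..<m}}"

definition tdeg :: "mono \<Rightarrow> nat" where
  "tdeg t = (\<Sum>v\<in>Poly_Mapping.keys t. Poly_Mapping.lookup t v)"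

definition pdeg :: "cpoly \<Rightarrow> nat" where
  "pdeg p = Max (tdeg ` Poly_Mapping.keys p)"

definition top_comp :: "cpoly \<Rightarrow> cpoly" where
  "top_comp p = (\<Sum>t\<in>{t\<in>Poly_Mapping.keys p. tdeg t = pdeg p}. Poly_Mapping.single t (Poly_Mapping.lookup p t))"

definition homogeneous_of :: "nat \<Rightarrow> cpoly \<Rightarrow> bool" where
  "homogeneous_of d p \<longleftrightarrow> (\<forall>t\<in>Poly_Mapping.keys p. tdeg t = d)"

definition cscale :: "complex \<Rightarrow> cpoly \<Rightarrow> cpoly" where
  "cscale c p = Poly_Mapping.single 0 c * p"

definition peval :: "cpoly \<Rightarrow> (nat \<Rightarrow> nat \<Rightarrow> complex) \<Rightarrow> complex" where
  "peval p A = (\<Sum>t\<in>Poly_Mapping.keys p.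
      Poly_Mapping.lookup p t * (\<Prod>v\<in>Poly_Mapping.keys t. A (fst v) (snd v) ^ Poly_Mapping.lookup t v))"

definition rename_mono :: "(nat \<times> nat \<Rightarrow> nat \<times> nat) \<Rightarrow> mono \<Rightarrow> mono" where
  "rename_mono \<phi> t = (\<Sum>v\<in>Poly_Mapping.keys t. Poly_Mapping.single (\<phi> v) (Poly_Mapping.lookup t v))"

definition rename_poly :: "(nat \<times> nat \<Rightarrow> nat \<times> nat) \<Rightarrow> cpoly \<Rightarrow> cpoly" where
  "rename_poly \<phi> p = (\<Sum>t\<in>Poly_Mapping.keys p. Poly_Mapping.single (rename_mono \<phi> t) (Poly_Mapping.lookup p t))"

definition gact :: "(nat \<Rightarrow> nat) \<Rightarrow> (nat \<Rightarrow> nat) \<Rightarrow> cpoly \<Rightarrow> cpoly" where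
  "gact g h p = rename_poly (\<lambda>(i,j). (g i, h j)) p"

text \<open>n x m complex matrices are represented as functions nat => nat => complex
  vanishing outside {..<n} x {..<m}.\<close>
definition matrices :: "nat \<Rightarrow> nat \<Rightarrow> (nat \<Rightarrow> nat \<Rightarrow> complex) set" where
  "matrices n m = {A. \<forall>i j. A i j \<noteq> 0 \<longrightarrow> i < n \<and> j < m}"

definition vanishing_ideal :: "nat \<Rightarrow> nat \<Rightarrow> (nat \<Rightarrow> nat \<Rightarrow> complex) set \<Rightarrow> cpoly set" where
  "vanishing_ideal n m Z = {p \<in> polyring n m. \<forall>A\<in>Z. peval p A = 0}"

inductive_set ideal_gen :: "nat \<Rightarrow> nat \<Rightarrow> cpoly set \<Rightarrow> cpoly set" for n m S where
  zero: "0 \<in> ideal_gen n m S"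
| gen: "g \<in> S \<Longrightarrow> q \<in> polyring n m \<Longrightarrow> q * g \<in> ideal_gen n m S"
| add: "a \<in> ideal_gen n m S \<Longrightarrow> b \<in> ideal_gen n m S \<Longrightarrow> a + b \<in> ideal_gen n m S"

definition gr_ideal :: "nat \<Rightarrow> nat \<Rightarrow> (nat \<Rightarrow> nat \<Rightarrow> complex) set \<Rightarrow> cpoly set" where
  "gr_ideal n m Z = ideal_gen n m (top_comp ` (vanishing_ideal n m Z - {0}))"

text \<open>Degree-d piece of the polynomial ring; R(Z)_d is this space modulo gr I(Z).\<close>
definition hom_piece :: "nat \<Rightarrow> nat \<Rightarrow> nat \<Rightarrow> cpoly set" where
  "hom_piece n m d = {p \<in> polyring n m. homogeneous_of d p}"

definition Zset :: "nat \<Rightarrow> nat \<Rightarrow> nat \<Rightarrow> (nat \<Rightarrow> nat \<Rightarrow> complex) set" where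
  "Zset n m r = {A \<in> matrices n m.
      (\<forall>i j. A i j = 0 \<or> A i j = 1) \<and>
      card {(i,j). i < n \<and> j < m \<and> A i j = 1} = r \<and>
      (\<forall>i j j'. A i j = 1 \<and> A i j' = 1 \<longrightarrow> j = j') \<and>
      (\<forall>i i' j. A i j = 1 \<and> A i' j = 1 \<longrightarrow> i = i')}"

text \<open>An isomorphism of S_n x S_m-modules R(Z1)_d ~= R(Z2)_d, written out on
  representatives: a C-linear map f on the degree-d piece V which maps J1 = gr I(Z1) /\ V
  exactly onto the preimage of J2 (so it induces a well-defined injective linear map
  V/J1 -> V/J2), is surjective modulo J2, and commutes with the group action modulo J2.\<close>
definition Rd_iso :: "nat \<Rightarrow> nat \<Rightarrow> nat \<Rightarrow> (nat \<Rightarrow> nat \<Rightarrow> complex) set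
    \<Rightarrow> (nat \<Rightarrow> nat \<Rightarrow> complex) set \<Rightarrow> bool" where
  "Rd_iso n m d Z1 Z2 \<longleftrightarrow>
    (let V = hom_piece n m d; J1 = gr_ideal n m Z1; J2 = gr_ideal n m Z2 in
     \<exists>f. (\<forall>p\<in>V. f p \<in> V) \<and>
         (\<forall>p\<in>V. \<forall>q\<in>V. f (p + q) = f p + f q) \<and>
         (\<forall>c. \<forall>p\<in>V. f (cscale c p) = cscale c (f p)) \<and>
         (\<forall>p\<in>V. f p \<in> J2 \<longleftrightarrow> p \<in> J1) \<and>
         (\<forall>q\<in>V. \<exists>p\<in>V. f p - q \<in> J2) \<and>
         (\<forall>g h. g permutes {..<n} \<longrightarrow> h permutes {..<m} \<longrightarrow>
            (\<forall>p\<in>V. f (gact g h p) - gact g h (f p) \<in> J2)))"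

end

theory Submission
  imports Defs
begin


definition meval :: "mono \<Rightarrow> (nat \<Rightarrow> nat \<Rightarrow> complex) \<Rightarrow> complex" where
  "meval t A = (\<Prod>v\<in>Poly_Mapping.keys t. A (fst v) (snd v) ^ Poly_Mapping.lookup t v)"

lemma peval_meval: "peval p A = (\<Sum>t\<in>Poly_Mapping.keys p. Poly_Mapping.lookup p t * meval t A)"
  by (simp add: peval_def meval_def)

lemma meval_superset:
  assumes "finite K" "Poly_Mapping.keys t \<subseteq> K"
  shows "meval t A = (\<Prod>v\<in>K. A (fst v) (snd v) ^ Poly_Mapping.lookup t v)"
  unfolding meval_def
  by (rule prod.mono_neutral_left) (use assms in \<open>auto simp: in_keys_iff\<close>)

lemma meval_add: "meval (a + b) A = meval a A * meval b A"
proof -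
  let ?K = "Poly_Mapping.keys a \<union> Poly_Mapping.keys b"
  have "meval (a + b) A = (\<Prod>v\<in>?K. A (fst v) (snd v) ^ (Poly_Mapping.lookup a v + Poly_Mapping.lookup b v))"
    using meval_superset[of ?K "a+b"] keys_add[of a b] by (simp add: lookup_add)
  also have "\<dots> = (\<Prod>v\<in>?K. A (fst v) (snd v) ^ Poly_Mapping.lookup a v) * (\<Prod>v\<in>?K. A (fst v) (snd v) ^ Poly_Mapping.lookup b v)"
    by (simp add: power_add prod.distrib)
  also have "\<dots> = meval a A * meval b A"
    using meval_superset[of ?K a] meval_superset[of ?K b] by simp
  finally show ?thesis .
qed

lemma peval_superset:
  assumes "finite T" "Poly_Mapping.keys p \<subseteq> T"
  shows "peval p A = (\<Sum>t\<in>T. Poly_Mapping.lookup p t * meval t A)"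
  unfolding peval_meval
  by (rule sum.mono_neutral_left) (use assms in \<open>auto simp: in_keys_iff\<close>)

lemma peval_add: "peval (p + q) A = peval p A + peval q A"
proof -
  let ?T = "Poly_Mapping.keys p \<union> Poly_Mapping.keys q"
  have "peval (p + q) A = (\<Sum>t\<in>?T. Poly_Mapping.lookup (p+q) t * meval t A)"
    using peval_superset[of ?T "p+q"] keys_add[of p q] by simp
  also have "\<dots> = (\<Sum>t\<in>?T. Poly_Mapping.lookup p t * meval t A) + (\<Sum>t\<in>?T. Poly_Mapping.lookup q t * meval t A)"
    by (simp add: lookup_add distrib_right sum.distrib)
  also have "\<dots> = peval p A + peval q A"
    using peval_superset[of ?T p] peval_superset[of ?T q] by simp
  finally show ?thesis .
qed

lemma keys_uminus': "Poly_Mapping.keys (- p) = Poly_Mapping.keys (p::cpoly)"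
  by (auto simp: in_keys_iff)

lemma peval_uminus: "peval (- p) A = - peval p A"
  unfolding peval_meval keys_uminus' by (simp add: sum_negf)

lemma peval_diff: "peval (p - q) A = peval p A - peval q A"
  using peval_add[of p "-q" A] peval_uminus[of q A] by simp

lemma peval_zero[simp]: "peval 0 A = 0"
  by (simp add: peval_def)

lemma peval_single: "peval (Poly_Mapping.single t c) A = c * meval t A"
  by (simp add: peval_meval)

lemma peval_sum: "peval (sum f I) A = (\<Sum>i\<in>I. peval (f i) A)"
proof (induction I rule: infinite_finite_induct)
  case (insert x F) then show ?case by (simp add: peval_add)
qed auto

lemma poly_expand: "(p::cpoly) = (\<Sum>t\<in>Poly_Mapping.keys p. Poly_Mapping.single t (Poly_Mapping.lookup p t))"
  by (rule poly_mapping_eqI) (simp add: lookup_sum lookup_single when_def sum.delta in_keys_iff)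

lemma mult_expand:
  "(q::cpoly) * g = (\<Sum>a\<in>Poly_Mapping.keys q. \<Sum>b\<in>Poly_Mapping.keys g.
       Poly_Mapping.single (a + b) (Poly_Mapping.lookup q a * Poly_Mapping.lookup g b))"
proof -
  have "q * g = (\<Sum>t\<in>Poly_Mapping.keys q. Poly_Mapping.single t (Poly_Mapping.lookup q t)) *
                (\<Sum>t\<in>Poly_Mapping.keys g. Poly_Mapping.single t (Poly_Mapping.lookup g t))"
    using poly_expand[of q] poly_expand[of g] by simp
  also have "\<dots> = (\<Sum>a\<in>Poly_Mapping.keys q. \<Sum>b\<in>Poly_Mapping.keys g.
       Poly_Mapping.single (a + b) (Poly_Mapping.lookup q a * Poly_Mapping.lookup g b))"
    by (simp add: sum_product mult_single)
  finally show ?thesis .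
qed

lemma peval_mult: "peval (p * q) A = peval p A * peval q A"
proof -
  have "peval (p * q) A = (\<Sum>a\<in>Poly_Mapping.keys p. \<Sum>b\<in>Poly_Mapping.keys q.
       Poly_Mapping.lookup p a * Poly_Mapping.lookup q b * meval (a + b) A)"
    by (subst mult_expand) (simp add: peval_sum peval_single)
  also have "\<dots> = (\<Sum>a\<in>Poly_Mapping.keys p. \<Sum>b\<in>Poly_Mapping.keys q.
       (Poly_Mapping.lookup p a * meval a A) * (Poly_Mapping.lookup q b * meval b A))"
    by (simp add: meval_add mult_ac)
  also have "\<dots> = peval p A * peval q A"
    by (simp add: peval_meval sum_product)
  finally show ?thesis .
qed




definition hc :: "nat \<Rightarrow> cpoly \<Rightarrow> cpoly" where
  "hc d p = (\<Sum>t\<in>{t\<in>Poly_Mapping.keys p. tdeg t = d}. Poly_Mapping.single t (Poly_Mapping.lookup p t))"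

lemma lookup_hc: "Poly_Mapping.lookup (hc d p) s = (if tdeg s = d then Poly_Mapping.lookup p s else 0)"
  by (simp add: hc_def lookup_sum lookup_single when_def sum.delta in_keys_iff)

lemma top_comp_hc: "top_comp p = hc (pdeg p) p"
  by (simp add: top_comp_def hc_def)

lemma keys_hc: "Poly_Mapping.keys (hc d p) = {t\<in>Poly_Mapping.keys p. tdeg t = d}"
  by (auto simp: in_keys_iff lookup_hc split: if_splits)

lemma hc_add: "hc d (p + q) = hc d p + hc d q"
  by (rule poly_mapping_eqI) (simp add: lookup_hc lookup_add)

lemma hc_zero[simp]: "hc d 0 = 0"
  by (rule poly_mapping_eqI) (simp add: lookup_hc)

lemma hc_hom: "homogeneous_of d p \<Longrightarrow> hc d p = p"
  by (rule poly_mapping_eqI) (auto simp: lookup_hc homogeneous_of_def in_keys_iff)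

lemma tdeg_superset:
  assumes "finite K" "Poly_Mapping.keys t \<subseteq> K"
  shows "tdeg t = (\<Sum>v\<in>K. Poly_Mapping.lookup t v)"
  unfolding tdeg_def
  by (rule sum.mono_neutral_left) (use assms in \<open>auto simp: in_keys_iff\<close>)

lemma tdeg_add: "tdeg (a + b) = tdeg a + tdeg b"
proof -
  let ?K = "Poly_Mapping.keys a \<union> Poly_Mapping.keys b"
  show ?thesis
    using tdeg_superset[of ?K "a+b"] tdeg_superset[of ?K a] tdeg_superset[of ?K b] keys_add[of a b]
    by (simp add: lookup_add sum.distrib)
qed

lemma card_keys_le_tdeg: "card (Poly_Mapping.keys t) \<le> tdeg t"
proof -
  have "card (Poly_Mapping.keys t) = (\<Sum>v\<in>Poly_Mapping.keys t. (1::nat))" by simp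
  also have "\<dots> \<le> tdeg t" unfolding tdeg_def
    by (rule sum_mono) (auto simp: in_keys_iff)
  finally show ?thesis .
qed

lemma lookup_mult_sum:
  "Poly_Mapping.lookup ((q::cpoly) * g) s = (\<Sum>a\<in>Poly_Mapping.keys q. \<Sum>b\<in>Poly_Mapping.keys g.
       (if s = a + b then Poly_Mapping.lookup q a * Poly_Mapping.lookup g b else 0))"
  by (subst mult_expand) (simp add: lookup_sum lookup_single when_def eq_commute)

lemma hc_mult_hom:
  assumes hg: "homogeneous_of e g"
  shows "hc d (q * g) = (if e \<le> d then hc (d - e) q * g else 0)"
proof (rule poly_mapping_eqI)
  fix s
  have key: "(if tdeg s = d then (if s = a + b then Poly_Mapping.lookup q a * Poly_Mapping.lookup g b else 0) else 0)
     = (if e \<le> d then (if s = a + b then Poly_Mapping.lookup (hc (d - e) q) a * Poly_Mapping.lookup g b else 0) else 0)"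
    if "b \<in> Poly_Mapping.keys g" for a b
  proof -
    have "tdeg b = e" using hg that by (simp add: homogeneous_of_def)
    then show ?thesis by (auto simp: lookup_hc tdeg_add)
  qed
  have sub: "Poly_Mapping.keys (hc (d - e) q) \<subseteq> Poly_Mapping.keys q" by (auto simp: keys_hc)
  have "Poly_Mapping.lookup (hc (d - e) q * g) s = (\<Sum>a\<in>Poly_Mapping.keys q. \<Sum>b\<in>Poly_Mapping.keys g.
       (if s = a + b then Poly_Mapping.lookup (hc (d - e) q) a * Poly_Mapping.lookup g b else 0))"
    unfolding lookup_mult_sum
    by (rule sum.mono_neutral_left) (use sub in \<open>auto simp: in_keys_iff intro!: sum.neutral\<close>)
  then show "Poly_Mapping.lookup (hc d (q * g)) s = Poly_Mapping.lookup (if e \<le> d then hc (d - e) q * g else 0) s"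
    using key by (auto simp: lookup_hc lookup_mult_sum intro!: sum.cong)
qed

lemma vars_add: "vars (p + q) \<subseteq> vars p \<union> vars q"
  unfolding vars_def using keys_add[of p q] by auto

lemma vars_uminus: "vars (- p) = vars p"
  unfolding vars_def by (simp add: keys_uminus')

lemma vars_diff: "vars (p - q) \<subseteq> vars p \<union> vars q"
  using vars_add[of p "-q"] vars_uminus[of q] by simp

lemma vars_mult: "vars ((p::cpoly) * q) \<subseteq> vars p \<union> vars q"
proof
  fix v assume "v \<in> vars (p * q)"
  then obtain t where t: "t \<in> Poly_Mapping.keys (p * q)" "v \<in> Poly_Mapping.keys t" by (auto simp: vars_def)
  then obtain a b where "t = a + b" "a \<in> Poly_Mapping.keys p" "b \<in> Poly_Mapping.keys q"
    using keys_mult[of p q] by blast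
  then show "v \<in> vars p \<union> vars q" using t keys_add[of a b] by (auto simp: vars_def)
qed

lemma vars_hc: "vars (hc d p) \<subseteq> vars p"
  unfolding vars_def keys_hc by auto

lemma polyring_add: "p \<in> polyring n m \<Longrightarrow> q \<in> polyring n m \<Longrightarrow> p + q \<in> polyring n m"
  using vars_add[of p q] by (auto simp: polyring_def)
lemma polyring_diff: "p \<in> polyring n m \<Longrightarrow> q \<in> polyring n m \<Longrightarrow> p - q \<in> polyring n m"
  using vars_diff[of p q] by (auto simp: polyring_def)
lemma polyring_uminus: "p \<in> polyring n m \<Longrightarrow> - p \<in> polyring n m"
  using vars_uminus[of p] by (auto simp: polyring_def)
lemma polyring_mult: "p \<in> polyring n m \<Longrightarrow> q \<in> polyring n m \<Longrightarrow> p * q \<in> polyring n m"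
  using vars_mult[of p q] by (auto simp: polyring_def)
lemma polyring_hc: "p \<in> polyring n m \<Longrightarrow> hc d p \<in> polyring n m"
  using vars_hc[of d p] by (auto simp: polyring_def)
lemma polyring_zero: "0 \<in> polyring n m"
  by (simp add: polyring_def vars_def)
lemma polyring_one: "1 \<in> polyring n m"
  by (simp add: polyring_def vars_def)




definition lowrep :: "nat \<Rightarrow> nat \<Rightarrow> (nat \<Rightarrow> nat \<Rightarrow> complex) set \<Rightarrow> nat \<Rightarrow> cpoly \<Rightarrow> bool" where
  "lowrep n m Z d p \<longleftrightarrow> (\<exists>q\<in>polyring n m. (\<forall>t\<in>Poly_Mapping.keys q. tdeg t < d) \<and> (\<forall>A\<in>Z. peval p A = peval q A))"

lemma lowrep_add:
  assumes "lowrep n m Z d p" "lowrep n m Z d p'"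
  shows "lowrep n m Z d (p + p')"
proof -
  obtain q where q: "q \<in> polyring n m" "\<forall>t\<in>Poly_Mapping.keys q. tdeg t < d" "\<forall>A\<in>Z. peval p A = peval q A"
    using assms(1) by (auto simp: lowrep_def)
  obtain q' where q': "q' \<in> polyring n m" "\<forall>t\<in>Poly_Mapping.keys q'. tdeg t < d" "\<forall>A\<in>Z. peval p' A = peval q' A"
    using assms(2) by (auto simp: lowrep_def)
  show ?thesis unfolding lowrep_def
    apply (rule bexI[of _ "q + q'"])
    using q q' keys_add[of q q'] by (auto simp: peval_add polyring_add)
qed

lemma lowrep_zero: "lowrep n m Z d 0"
  unfolding lowrep_def by (rule bexI[of _ 0]) (auto simp: polyring_zero)

lemma pdeg_ge: "t \<in> Poly_Mapping.keys f \<Longrightarrow> tdeg t \<le> pdeg f"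
  unfolding pdeg_def by (rule Max_ge) auto

lemma ideal_lowrep:
  assumes "a \<in> ideal_gen n m (top_comp ` (vanishing_ideal n m Z - {0}))"
  shows "a \<in> polyring n m \<and> (\<forall>d. lowrep n m Z d (hc d a))"
  using assms
proof (induction rule: ideal_gen.induct)
  case zero
  then show ?case by (simp add: polyring_zero lowrep_zero)
next
  case (add a b)
  then show ?case by (simp add: polyring_add hc_add lowrep_add)
next
  case (gen g q)
  obtain f where f: "f \<in> vanishing_ideal n m Z" "f \<noteq> 0" "g = top_comp f" using gen(1) by auto
  define e where "e = pdeg f"
  have fpr: "f \<in> polyring n m" and fvan: "\<forall>A\<in>Z. peval f A = 0" using f(1) by (auto simp: vanishing_ideal_def)
  have ge: "g = hc e f" using f(3) by (simp add: top_comp_hc e_def)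
  have ghom: "homogeneous_of e g" using ge by (simp add: homogeneous_of_def keys_hc)
  have gpr: "g \<in> polyring n m" using ge fpr polyring_hc by simp
  have qgpr: "q * g \<in> polyring n m" using gen(2) gpr polyring_mult by blast
  define h where "h = f - g"
  have hpr: "h \<in> polyring n m" using fpr gpr polyring_diff h_def by blast
  have hdeg: "\<forall>t\<in>Poly_Mapping.keys h. tdeg t < e"
  proof
    fix t assume t: "t \<in> Poly_Mapping.keys h"
    have "Poly_Mapping.lookup h t = (if tdeg t = e then 0 else Poly_Mapping.lookup f t)"
      by (simp add: h_def ge lookup_minus lookup_hc)
    with t have "tdeg t \<noteq> e" "t \<in> Poly_Mapping.keys f" by (auto simp: in_keys_iff split: if_splits)
    then show "tdeg t < e" using pdeg_ge[of t f] e_def by simp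
  qed
  have "lowrep n m Z d (hc d (q * g))" for d
  proof (cases "e \<le> d")
    case True
    define q' where "q' = hc (d - e) q"
    have q'pr: "q' \<in> polyring n m" using gen(2) polyring_hc q'_def by blast
    have eq: "hc d (q * g) = q' * g" using hc_mult_hom[OF ghom] True q'_def by simp
    define Q where "Q = - (q' * h)"
    have Qpr: "Q \<in> polyring n m" using q'pr hpr polyring_mult polyring_uminus Q_def by blast
    have Qdeg: "\<forall>t\<in>Poly_Mapping.keys Q. tdeg t < d"
    proof
      fix t assume "t \<in> Poly_Mapping.keys Q"
      then have "t \<in> Poly_Mapping.keys (q' * h)" by (simp add: Q_def keys_uminus')
      then obtain a b where ab: "t = a + b" "a \<in> Poly_Mapping.keys q'" "b \<in> Poly_Mapping.keys h"
        using keys_mult[of q' h] by blast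
      have "tdeg a = d - e" using ab(2) by (simp add: q'_def keys_hc)
      moreover have "tdeg b < e" using ab(3) hdeg by blast
      ultimately show "tdeg t < d" using ab(1) True by (simp add: tdeg_add)
    qed
    have "peval (q' * g) A = peval Q A" if "A \<in> Z" for A
    proof -
      have "q' * g = q' * f - q' * h" by (simp add: h_def algebra_simps)
      then have "peval (q' * g) A = peval q' A * peval f A - peval (q' * h) A"
        by (simp add: peval_diff peval_mult)
      also have "\<dots> = peval Q A" using fvan that by (simp add: Q_def peval_uminus)
      finally show ?thesis .
    qed
    then show ?thesis unfolding lowrep_def eq using Qpr Qdeg by blast
  next
    case False
    then show ?thesis using hc_mult_hom[OF ghom, of d q] by (simp add: lowrep_zero)
  qed
  then show ?case using qgpr by blast
qed

lemma gr_imp_lowrep: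
  assumes "p \<in> hom_piece n m d" "p \<in> gr_ideal n m Z"
  shows "lowrep n m Z d p"
proof -
  have "lowrep n m Z d (hc d p)" using ideal_lowrep assms(2) by (auto simp: gr_ideal_def)
  moreover have "hc d p = p" using assms(1) hc_hom by (simp add: hom_piece_def)
  ultimately show ?thesis by simp
qed

lemma lowrep_imp_gr:
  assumes hp: "p \<in> hom_piece n m d" and lr: "lowrep n m Z d p"
  shows "p \<in> gr_ideal n m Z"
proof (cases "p = 0")
  case True
  then show ?thesis by (simp add: gr_ideal_def ideal_gen.zero)
next
  case False
  obtain q where q: "q \<in> polyring n m" "\<forall>t\<in>Poly_Mapping.keys q. tdeg t < d" "\<forall>A\<in>Z. peval p A = peval q A"
    using lr by (auto simp: lowrep_def)
  have ppr: "p \<in> polyring n m" and phom: "homogeneous_of d p" using hp by (auto simp: hom_piece_def)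
  define f where "f = p - q"
  have lf: "Poly_Mapping.lookup f s = (if tdeg s = d then Poly_Mapping.lookup p s else - Poly_Mapping.lookup q s)" for s
  proof -
    have lq: "tdeg s \<ge> d \<Longrightarrow> Poly_Mapping.lookup q s = 0" using q(2) by (force simp: in_keys_iff)
    have lp: "tdeg s \<noteq> d \<Longrightarrow> Poly_Mapping.lookup p s = 0" using phom by (force simp: homogeneous_of_def in_keys_iff)
    show ?thesis using lq lp by (simp add: f_def lookup_minus)
  qed
  have fvan: "f \<in> vanishing_ideal n m Z"
    using q ppr by (simp add: vanishing_ideal_def f_def polyring_diff peval_diff)
  obtain s where s: "Poly_Mapping.lookup p s \<noteq> 0"
    using False poly_mapping_eqI[of p 0] by auto
  have sd: "tdeg s = d" using s phom by (force simp: homogeneous_of_def in_keys_iff)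
  have sf: "s \<in> Poly_Mapping.keys f" using s sd lf by (simp add: in_keys_iff)
  have fne: "f \<noteq> 0" using sf by auto
  have kf: "\<forall>t\<in>Poly_Mapping.keys f. tdeg t \<le> d"
  proof
    fix t assume "t \<in> Poly_Mapping.keys f"
    then have "Poly_Mapping.lookup f t \<noteq> 0" by (simp add: in_keys_iff)
    then show "tdeg t \<le> d" using lf[of t] q(2) by (force simp: in_keys_iff split: if_splits)
  qed
  have pd: "pdeg f = d" unfolding pdeg_def
    by (rule Max_eqI) (use kf sf sd in auto)
  have tc: "top_comp f = p"
    by (rule poly_mapping_eqI) (use phom in \<open>auto simp: top_comp_hc pd lookup_hc lf homogeneous_of_def in_keys_iff\<close>)
  have "p \<in> top_comp ` (vanishing_ideal n m Z - {0})" using tc fvan fne by force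
  then have "1 * p \<in> ideal_gen n m (top_comp ` (vanishing_ideal n m Z - {0}))"
    by (rule ideal_gen.gen) (simp add: polyring_one)
  then show ?thesis by (simp add: gr_ideal_def)
qed




definition nonatt :: "(nat \<times> nat) set \<Rightarrow> bool" where
  "nonatt B \<longleftrightarrow> (\<forall>x\<in>B. \<forall>y\<in>B. (fst x = fst y \<or> snd x = snd y) \<longrightarrow> x = y)"

definition matchs :: "nat \<Rightarrow> nat \<Rightarrow> nat \<Rightarrow> (nat \<times> nat) set set" where
  "matchs n m l = {B. B \<subseteq> {..<n} \<times> {..<m} \<and> card B = l \<and> nonatt B}"

definition ind :: "(nat \<times> nat) set \<Rightarrow> nat \<Rightarrow> nat \<Rightarrow> complex" where
  "ind B = (\<lambda>i j. if (i, j) \<in> B then 1 else 0)"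

lemma matchs_finite: "B \<in> matchs n m l \<Longrightarrow> finite B"
  unfolding matchs_def by (auto intro: finite_subset)

lemma Zset_eq: "Zset n m l = ind ` matchs n m l"
proof
  show "Zset n m l \<subseteq> ind ` matchs n m l"
  proof
    fix A assume A: "A \<in> Zset n m l"
    define B where "B = {(i,j). i < n \<and> j < m \<and> A i j = 1}"
    have "A = ind B"
    proof (intro ext)
      fix i j
      have "A i j = 0 \<or> A i j = 1" using A by (simp add: Zset_def)
      moreover have mat: "\<forall>i j. A i j \<noteq> 0 \<longrightarrow> i < n \<and> j < m" using A by (simp add: Zset_def matrices_def)
      then have "A i j = 1 \<Longrightarrow> i < n \<and> j < m" using mat[rule_format, of i j] by simp
      ultimately show "A i j = ind B i j" by (auto simp: ind_def B_def)
    qed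
    moreover have "B \<in> matchs n m l"
    proof -
      have r: "\<forall>i j j'. A i j = 1 \<and> A i j' = 1 \<longrightarrow> j = j'" and c: "\<forall>i i' j. A i j = 1 \<and> A i' j = 1 \<longrightarrow> i = i'"
        and cd: "card {(i,j). i < n \<and> j < m \<and> A i j = 1} = l"
        using A by (auto simp: Zset_def)
      have "nonatt B" unfolding nonatt_def B_def
      proof (intro ballI impI)
        fix x y assume x: "x \<in> {(i,j). i < n \<and> j < m \<and> A i j = 1}" and y: "y \<in> {(i,j). i < n \<and> j < m \<and> A i j = 1}"
          and "fst x = fst y \<or> snd x = snd y"
        obtain a b where xa: "x = (a,b)" by force
        obtain a' b' where ya: "y = (a',b')" by force
        have "A a b = 1" "A a' b' = 1" using x y xa ya by auto
        then show "x = y" using r c \<open>fst x = fst y \<or> snd x = snd y\<close> xa ya by (metis fst_conv snd_conv)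
      qed
      then show ?thesis using cd unfolding matchs_def B_def by auto
    qed
    ultimately show "A \<in> ind ` matchs n m l" by blast
  qed
next
  show "ind ` matchs n m l \<subseteq> Zset n m l"
  proof
    fix A assume "A \<in> ind ` matchs n m l"
    then obtain B where B: "B \<in> matchs n m l" "A = ind B" by blast
    have sub: "B \<subseteq> {..<n} \<times> {..<m}" and cB: "card B = l" and na: "nonatt B"
      using B(1) by (auto simp: matchs_def)
    have "{(i,j). i < n \<and> j < m \<and> ind B i j = 1} = B" using sub by (auto simp: ind_def)
    moreover have r: "\<forall>i j j'. (i,j)\<in>B \<and> (i,j')\<in>B \<longrightarrow> j = j'"
    proof (intro allI impI)
      fix i j j' assume "(i,j)\<in>B \<and> (i,j')\<in>B"
      then show "j = j'" using na unfolding nonatt_def by (metis fst_conv snd_conv)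
    qed
    moreover have c: "\<And>i i' j. (i,j)\<in>B \<Longrightarrow> (i',j)\<in>B \<Longrightarrow> i = i'"
      using na unfolding nonatt_def by (metis fst_conv snd_conv)
    ultimately show "A \<in> Zset n m l"
      using B(2) sub cB unfolding Zset_def matrices_def
      by (auto simp: ind_def split: if_splits; metis c)
  qed
qed

lemma meval_ind: "meval t (ind B) = (if Poly_Mapping.keys t \<subseteq> B then 1 else 0)"
proof (cases "Poly_Mapping.keys t \<subseteq> B")
  case True
  then show ?thesis by (auto simp: meval_def ind_def intro!: prod.neutral)
next
  case False
  then obtain v where v: "v \<in> Poly_Mapping.keys t" "v \<notin> B" by auto
  have "ind B (fst v) (snd v) ^ Poly_Mapping.lookup t v = 0"
    using v by (auto simp: ind_def in_keys_iff)
  then have "meval t (ind B) = 0" unfolding meval_def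
    using v(1) by (auto intro: prod_zero)
  then show ?thesis using False by simp
qed

definition kap :: "cpoly \<Rightarrow> (nat \<times> nat) set \<Rightarrow> complex" where
  "kap p S = (\<Sum>t\<in>{t\<in>Poly_Mapping.keys p. Poly_Mapping.keys t = S}. Poly_Mapping.lookup p t)"

definition ev :: "((nat \<times> nat) set \<Rightarrow> complex) \<Rightarrow> (nat \<times> nat) set \<Rightarrow> complex" where
  "ev c B = (\<Sum>S\<in>Pow B. c S)"

lemma peval_ind:
  assumes "finite B"
  shows "peval p (ind B) = ev (kap p) B"
proof -
  have "peval p (ind B) = (\<Sum>t\<in>Poly_Mapping.keys p. Poly_Mapping.lookup p t * (if Poly_Mapping.keys t \<subseteq> B then 1 else 0))"
    by (simp add: peval_meval meval_ind)
  also have "\<dots> = (\<Sum>t\<in>{t\<in>Poly_Mapping.keys p. Poly_Mapping.keys t \<subseteq> B}. Poly_Mapping.lookup p t)"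
    by (simp add: sum.inter_filter[symmetric] if_distrib cong: if_cong)
  also have "\<dots> = (\<Sum>S\<in>Pow B. \<Sum>t\<in>{t\<in>{t\<in>Poly_Mapping.keys p. Poly_Mapping.keys t \<subseteq> B}. Poly_Mapping.keys t = S}. Poly_Mapping.lookup p t)"
    by (rule sum.group[symmetric]) (use assms in auto)
  also have "\<dots> = ev (kap p) B"
    unfolding ev_def kap_def
  proof (rule sum.cong)
    fix S assume "S \<in> Pow B"
    then have "{t\<in>{t\<in>Poly_Mapping.keys p. Poly_Mapping.keys t \<subseteq> B}. Poly_Mapping.keys t = S} = {t\<in>Poly_Mapping.keys p. Poly_Mapping.keys t = S}"
      by auto
    then show "(\<Sum>t\<in>{t\<in>{t\<in>Poly_Mapping.keys p. Poly_Mapping.keys t \<subseteq> B}. Poly_Mapping.keys t = S}. Poly_Mapping.lookup p t) = (\<Sum>t\<in>{t\<in>Poly_Mapping.keys p. Poly_Mapping.keys t = S}. Poly_Mapping.lookup p t)"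
      by simp
  qed simp
  finally show ?thesis .
qed

definition lowB :: "nat \<Rightarrow> nat \<Rightarrow> nat \<Rightarrow> nat \<Rightarrow> cpoly \<Rightarrow> bool" where
  "lowB n m l d p \<longleftrightarrow> (\<exists>b. (\<forall>S. d \<le> card S \<longrightarrow> b S = 0) \<and> (\<forall>B\<in>matchs n m l. ev (kap p) B = ev b B))"

definition mono_of :: "(nat \<times> nat) set \<Rightarrow> mono" where
  "mono_of S = (\<Sum>v\<in>S. Poly_Mapping.single v 1)"

lemma lookup_mono_of: "finite S \<Longrightarrow> Poly_Mapping.lookup (mono_of S) v = (if v \<in> S then 1 else 0)"
  by (simp add: mono_of_def lookup_sum lookup_single when_def sum.delta')

lemma keys_mono_of: "finite S \<Longrightarrow> Poly_Mapping.keys (mono_of S) = S"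
  by (auto simp: in_keys_iff lookup_mono_of split: if_splits)

lemma tdeg_mono_of: "finite S \<Longrightarrow> tdeg (mono_of S) = card S"
  by (simp add: tdeg_def keys_mono_of lookup_mono_of)

lemma lowrep_iff_lowB: "lowrep n m (Zset n m l) d p \<longleftrightarrow> lowB n m l d p"
proof
  assume "lowrep n m (Zset n m l) d p"
  then obtain q where q: "q \<in> polyring n m" "\<forall>t\<in>Poly_Mapping.keys q. tdeg t < d"
      "\<forall>A\<in>Zset n m l. peval p A = peval q A"
    by (auto simp: lowrep_def)
  have "d \<le> card S \<Longrightarrow> kap q S = 0" for S
  proof -
    assume dS: "d \<le> card S"
    have emp: "{t\<in>Poly_Mapping.keys q. Poly_Mapping.keys t = S} = {}"
    proof (rule ccontr)
      assume "{t\<in>Poly_Mapping.keys q. Poly_Mapping.keys t = S} \<noteq> {}"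
      then obtain t where t: "t \<in> Poly_Mapping.keys q" "Poly_Mapping.keys t = S" by blast
      then have "card S \<le> tdeg t" using card_keys_le_tdeg[of t] by simp
      moreover have "tdeg t < d" using q(2) t(1) by blast
      ultimately show False using dS by simp
    qed
    show "kap q S = 0" unfolding kap_def emp by simp
  qed
  moreover have "\<forall>B\<in>matchs n m l. ev (kap p) B = ev (kap q) B"
    using q(3) by (auto simp: Zset_eq peval_ind[symmetric] matchs_finite)
  ultimately show "lowB n m l d p" unfolding lowB_def by blast
next
  assume "lowB n m l d p"
  then obtain b where b: "\<forall>S. d \<le> card S \<longrightarrow> b S = 0" "\<forall>B\<in>matchs n m l. ev (kap p) B = ev b B"
    by (auto simp: lowB_def)
  define F where "F = {S. S \<subseteq> {..<n} \<times> {..<m} \<and> card S < d}"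
  have finF: "finite F" unfolding F_def by (rule finite_subset[of _ "Pow ({..<n} \<times> {..<m})"]) auto
  have finS: "S \<in> F \<Longrightarrow> finite S" for S unfolding F_def by (auto intro: finite_subset)
  define q where "q = (\<Sum>S\<in>F. Poly_Mapping.single (mono_of S) (b S))"
  have kq: "t \<in> Poly_Mapping.keys q \<Longrightarrow> \<exists>S\<in>F. t = mono_of S" for t
    using keys_sum[of "\<lambda>S. Poly_Mapping.single (mono_of S) (b S)" F] unfolding q_def
    by (auto split: if_splits)
  have qpr: "q \<in> polyring n m"
    unfolding polyring_def vars_def
  proof (safe)
    fix t a b assume t: "t \<in> Poly_Mapping.keys q" and ab: "(a, b) \<in> Poly_Mapping.keys t"
    obtain S where S: "S \<in> F" "t = mono_of S" using kq[OF t] by blast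
    have fS: "finite S" using finS S(1) by blast
    have "(a, b) \<in> S" using ab S(2) keys_mono_of[OF fS] by simp
    then show "a < n" "b < m" using S(1) by (auto simp: F_def)
  qed
  have qdeg: "\<forall>t\<in>Poly_Mapping.keys q. tdeg t < d"
  proof
    fix t assume t: "t \<in> Poly_Mapping.keys q"
    obtain S where S: "S \<in> F" "t = mono_of S" using kq[OF t] by blast
    have fS: "finite S" using finS S(1) by blast
    have "card S < d" using S(1) unfolding F_def by blast
    then show "tdeg t < d" using S(2) tdeg_mono_of[OF fS] by simp
  qed
  have "peval p A = peval q A" if A: "A \<in> Zset n m l" for A
  proof -
    obtain B where B: "B \<in> matchs n m l" "A = ind B" using A Zset_eq by blast
    have finB: "finite B" using B(1) matchs_finite by blast
    have sub: "B \<subseteq> {..<n} \<times> {..<m}" using B(1) by (simp add: matchs_def)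
    have "peval q (ind B) = (\<Sum>S\<in>F. b S * (if S \<subseteq> B then 1 else 0))"
      unfolding q_def peval_sum peval_single
      by (rule sum.cong) (auto simp: meval_ind keys_mono_of finS)
    also have "\<dots> = (\<Sum>S\<in>{S\<in>F. S \<subseteq> B}. b S)"
      by (auto simp: sum.inter_filter[OF finF] intro!: sum.cong)
    also have "{S\<in>F. S \<subseteq> B} = {S\<in>Pow B. card S < d}" using sub by (auto simp: F_def)
    also have "(\<Sum>S\<in>{S\<in>Pow B. card S < d}. b S) = (\<Sum>S\<in>Pow B. b S)"
      by (rule sum.mono_neutral_left) (use finB b(1) not_less in auto)
    also have "\<dots> = peval p (ind B)" using b(2) B(1) peval_ind[OF finB] by (simp add: ev_def)
    finally show ?thesis using B(2) by simp
  qed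
  then show "lowrep n m (Zset n m l) d p" unfolding lowrep_def using qpr qdeg by blast
qed




definition Kf :: "nat \<Rightarrow> ((nat \<times> nat) set \<Rightarrow> complex) \<Rightarrow> (nat \<times> nat) set \<Rightarrow> complex" where
  "Kf d \<psi> B = (\<Sum>Y\<in>{Y. Y \<subseteq> B \<and> card Y = d}. \<psi> Y)"

lemma count_supersets:
  assumes "finite B" "S \<subseteq> B" "card S \<le> d"
  shows "card {Y. S \<subseteq> Y \<and> Y \<subseteq> B \<and> card Y = d} = (card B - card S) choose (d - card S)"
proof -
  have fS: "finite S" using assms finite_subset by blast
  have "bij_betw (\<lambda>Y. Y - S) {Y. S \<subseteq> Y \<and> Y \<subseteq> B \<and> card Y = d} {Z. Z \<subseteq> B - S \<and> card Z = d - card S}"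
  proof (rule bij_betw_byWitness[where f' = "\<lambda>Z. Z \<union> S"])
    show "\<forall>a\<in>{Y. S \<subseteq> Y \<and> Y \<subseteq> B \<and> card Y = d}. a - S \<union> S = a" by auto
    show "\<forall>a'\<in>{Z. Z \<subseteq> B - S \<and> card Z = d - card S}. a' \<union> S - S = a'" by auto
    show "(\<lambda>Y. Y - S) ` {Y. S \<subseteq> Y \<and> Y \<subseteq> B \<and> card Y = d} \<subseteq> {Z. Z \<subseteq> B - S \<and> card Z = d - card S}"
    proof clarify
      fix Y assume Y: "S \<subseteq> Y" "Y \<subseteq> B" "d = card Y"
      have "finite Y" using Y assms(1) finite_subset by blast
      then show "Y - S \<subseteq> B - S \<and> card (Y - S) = card Y - card S" using Y by (auto simp: card_Diff_subset fS)
    qed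
    show "(\<lambda>Z. Z \<union> S) ` {Z. Z \<subseteq> B - S \<and> card Z = d - card S} \<subseteq> {Y. S \<subseteq> Y \<and> Y \<subseteq> B \<and> card Y = d}"
    proof clarify
      fix Z assume Z: "Z \<subseteq> B - S" "card Z = d - card S"
      have "finite Z" using Z assms(1) finite_subset by blast
      moreover have "Z \<inter> S = {}" using Z by auto
      ultimately have "card (Z \<union> S) = card Z + card S" using fS card_Un_disjoint by blast
      then show "S \<subseteq> Z \<union> S \<and> Z \<union> S \<subseteq> B \<and> card (Z \<union> S) = d" using Z assms by auto
    qed
  qed
  then have "card {Y. S \<subseteq> Y \<and> Y \<subseteq> B \<and> card Y = d} = card {Z. Z \<subseteq> B - S \<and> card Z = d - card S}"
    by (rule bij_betw_same_card)
  also have "\<dots> = card (B - S) choose (d - card S)" using assms(1) by (simp add: n_subsets)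
  also have "card (B - S) = card B - card S" using assms fS by (simp add: card_Diff_subset)
  finally show ?thesis .
qed

definition beta :: "nat \<Rightarrow> nat \<Rightarrow> (nat \<times> nat) set \<Rightarrow> complex" where
  "beta d l S = of_nat ((l - card S) choose (d - card S))"

definition psi :: "nat \<Rightarrow> nat \<Rightarrow> ((nat \<times> nat) set \<Rightarrow> complex) \<Rightarrow> (nat \<times> nat) set \<Rightarrow> complex" where
  "psi d l c Y = (\<Sum>S\<in>Pow Y. c S / beta d l S)"

lemma beta_nz: "d \<le> l \<Longrightarrow> card S \<le> d \<Longrightarrow> beta d l S \<noteq> 0"
  by (simp add: beta_def binomial_eq_0_iff)

lemma ev_Kf:
  assumes fB: "finite B" and cB: "card B = l" and dl: "d \<le> l" and sc: "\<forall>S. d < card S \<longrightarrow> c S = 0"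
  shows "ev c B = Kf d (psi d l c) B"
proof -
  let ?Y = "{Y. Y \<subseteq> B \<and> card Y = d}"
  have fY: "finite ?Y" by (rule finite_subset[of _ "Pow B"]) (use fB in auto)
  have "Kf d (psi d l c) B = (\<Sum>Y\<in>?Y. \<Sum>S\<in>{S\<in>Pow B. S \<subseteq> Y}. c S / beta d l S)"
    unfolding Kf_def psi_def by (rule sum.cong) (auto intro!: sum.cong)
  also have "\<dots> = (\<Sum>S\<in>Pow B. \<Sum>Y\<in>{Y\<in>?Y. S \<subseteq> Y}. c S / beta d l S)"
    by (rule sum.swap_restrict) (use fY fB in auto)
  also have "\<dots> = (\<Sum>S\<in>Pow B. c S)"
  proof (rule sum.cong)
    fix S assume S: "S \<in> Pow B"
    show "(\<Sum>Y\<in>{Y\<in>?Y. S \<subseteq> Y}. c S / beta d l S) = c S"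
    proof (cases "card S \<le> d")
      case True
      have "{Y\<in>?Y. S \<subseteq> Y} = {Y. S \<subseteq> Y \<and> Y \<subseteq> B \<and> card Y = d}" by auto
      then have "card {Y\<in>?Y. S \<subseteq> Y} = (card B - card S) choose (d - card S)"
        using count_supersets[OF fB _ True] S by simp
      then have "(\<Sum>Y\<in>{Y\<in>?Y. S \<subseteq> Y}. c S / beta d l S) = beta d l S * (c S / beta d l S)"
        by (simp add: beta_def cB)
      then show ?thesis using beta_nz[OF dl True] by simp
    next
      case False
      then show ?thesis using sc by simp
    qed
  qed simp
  finally show ?thesis by (simp add: ev_def)
qed

lemma nonatt_subset: "nonatt B \<Longrightarrow> A \<subseteq> B \<Longrightarrow> nonatt A"
  unfolding nonatt_def by blast

lemma Kf_up:
  assumes dl: "d \<le> l" and van: "\<forall>B\<in>matchs n m l. Kf d \<psi> B = 0"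
  shows "\<forall>B\<in>matchs n m (Suc l). Kf d \<psi> B = 0"
proof
  fix B assume B: "B \<in> matchs n m (Suc l)"
  have fB: "finite B" using B matchs_finite by blast
  have cB: "card B = Suc l" using B by (simp add: matchs_def)
  let ?Y = "{Y. Y \<subseteq> B \<and> card Y = d}"
  have fY: "finite ?Y" by (rule finite_subset[of _ "Pow B"]) (use fB in auto)
  have "B - {x} \<in> matchs n m l" if "x \<in> B" for x
    using B that fB nonatt_subset[of B "B - {x}"] by (auto simp: matchs_def)
  then have "(\<Sum>x\<in>B. Kf d \<psi> (B - {x})) = 0" using van by simp
  moreover have "(\<Sum>x\<in>B. Kf d \<psi> (B - {x})) = (\<Sum>x\<in>B. \<Sum>Y\<in>{Y\<in>?Y. x \<notin> Y}. \<psi> Y)"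
    unfolding Kf_def by (rule sum.cong) (auto intro!: sum.cong arg_cong[where f="sum _"])
  moreover have "\<dots> = (\<Sum>Y\<in>?Y. \<Sum>x\<in>{x\<in>B. x \<notin> Y}. \<psi> Y)"
    by (rule sum.swap_restrict) (use fY fB in auto)
  moreover have "\<dots> = (\<Sum>Y\<in>?Y. of_nat (Suc l - d) * \<psi> Y)"
  proof (rule sum.cong)
    fix Y assume Y: "Y \<in> ?Y"
    have "{x\<in>B. x \<notin> Y} = B - Y" by auto
    moreover have "card (B - Y) = Suc l - d" using Y fB cB by (auto simp: card_Diff_subset finite_subset)
    ultimately show "(\<Sum>x\<in>{x\<in>B. x \<notin> Y}. \<psi> Y) = of_nat (Suc l - d) * \<psi> Y" by simp
  qed simp
  moreover have "\<dots> = of_nat (Suc l - d) * Kf d \<psi> B" by (simp add: Kf_def sum_distrib_left)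
  ultimately have "of_nat (Suc l - d) * Kf d \<psi> B = 0" by simp
  moreover have "(of_nat (Suc l - d) :: complex) \<noteq> 0"
  proof -
    have "Suc l - d \<noteq> 0" using dl by simp
    then show ?thesis by (metis of_nat_eq_0_iff)
  qed
  ultimately show "Kf d \<psi> B = 0" by simp
qed

lemma alt_sum_zero:
  assumes fF: "finite F" and TF: "T \<subseteq> F" "T \<noteq> F"
  shows "(\<Sum>E\<in>{E. T \<subseteq> E \<and> E \<subseteq> F}. (-1::complex) ^ card E) = 0"
proof -
  obtain x where x: "x \<in> F" "x \<notin> T" using TF by blast
  let ?P0 = "{E. T \<subseteq> E \<and> E \<subseteq> F \<and> x \<notin> E}"
  let ?P1 = "{E. T \<subseteq> E \<and> E \<subseteq> F \<and> x \<in> E}"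
  have fP0: "finite ?P0" by (rule finite_subset[of _ "Pow F"]) (use fF in auto)
  have fP1: "finite ?P1" by (rule finite_subset[of _ "Pow F"]) (use fF in auto)
  have un: "{E. T \<subseteq> E \<and> E \<subseteq> F} = ?P0 \<union> ?P1" by auto
  have im: "?P1 = insert x ` ?P0"
  proof
    show "?P1 \<subseteq> insert x ` ?P0"
    proof
      fix E assume E: "E \<in> ?P1"
      then have "E = insert x (E - {x})" "E - {x} \<in> ?P0" using x by auto
      then show "E \<in> insert x ` ?P0" by blast
    qed
    show "insert x ` ?P0 \<subseteq> ?P1" using x by auto
  qed
  have inj: "inj_on (insert x) ?P0"
    unfolding inj_on_def by (metis insert_Diff1 singletonI Diff_insert_absorb mem_Collect_eq)
  have "(\<Sum>E\<in>?P1. (-1::complex) ^ card E) = (\<Sum>E\<in>?P0. (-1::complex) ^ card (insert x E))"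
    unfolding im by (rule sum.reindex[OF inj, unfolded comp_def])
  also have "\<dots> = (\<Sum>E\<in>?P0. - ((-1::complex) ^ card E))"
  proof (rule sum.cong)
    fix E assume E: "E \<in> ?P0"
    then have "finite E" using fF finite_subset by blast
    then show "(-1::complex) ^ card (insert x E) = - ((-1) ^ card E)" using E by simp
  qed simp
  finally have "(\<Sum>E\<in>?P1. (-1::complex) ^ card E) = - (\<Sum>E\<in>?P0. (-1::complex) ^ card E)"
    by (simp add: sum_negf)
  moreover have "(\<Sum>E\<in>{E. T \<subseteq> E \<and> E \<subseteq> F}. (-1::complex) ^ card E)
      = (\<Sum>E\<in>?P0. (-1::complex) ^ card E) + (\<Sum>E\<in>?P1. (-1::complex) ^ card E)"
    unfolding un by (rule sum.union_disjoint) (use fP0 fP1 in auto)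
  ultimately show ?thesis by simp
qed

lemma finite_difference:
  assumes fA: "finite A" and fE0: "finite E0" and disj: "A \<inter> E0 = {}" and cE0: "card E0 = Suc d"
  shows "(\<Sum>E\<in>Pow E0. (-1::complex) ^ card E * Kf d \<psi> (A \<union> E)) = 0"
proof -
  let ?Y = "{Y. Y \<subseteq> A \<union> E0 \<and> card Y = d}"
  have fY: "finite ?Y" by (rule finite_subset[of _ "Pow (A \<union> E0)"]) (use fA fE0 in auto)
  have "(\<Sum>E\<in>Pow E0. (-1::complex) ^ card E * Kf d \<psi> (A \<union> E))
      = (\<Sum>E\<in>Pow E0. \<Sum>Y\<in>{Y\<in>?Y. Y \<subseteq> A \<union> E}. (-1::complex) ^ card E * \<psi> Y)"
    unfolding Kf_def sum_distrib_left
    by (rule sum.cong) (auto intro!: sum.cong arg_cong[where f="sum _"])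
  also have "\<dots> = (\<Sum>Y\<in>?Y. \<Sum>E\<in>{E\<in>Pow E0. Y \<subseteq> A \<union> E}. (-1::complex) ^ card E * \<psi> Y)"
    by (rule sum.swap_restrict) (use fY fE0 in auto)
  also have "\<dots> = (\<Sum>Y\<in>?Y. (\<Sum>E\<in>{E\<in>Pow E0. Y \<subseteq> A \<union> E}. (-1::complex) ^ card E) * \<psi> Y)"
    by (simp add: sum_distrib_right)
  also have "\<dots> = 0"
  proof (rule sum.neutral, rule ballI)
    fix Y assume Y: "Y \<in> ?Y"
    have fYY: "finite Y" using Y fA fE0 finite_subset by blast
    have "{E\<in>Pow E0. Y \<subseteq> A \<union> E} = {E. Y \<inter> E0 \<subseteq> E \<and> E \<subseteq> E0}" using Y disj by auto
    moreover have "Y \<inter> E0 \<noteq> E0"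
    proof
      assume "Y \<inter> E0 = E0"
      then have "card E0 \<le> card Y" using fYY by (metis card_mono inf_le1)
      then show False using Y cE0 by simp
    qed
    ultimately have "(\<Sum>E\<in>{E\<in>Pow E0. Y \<subseteq> A \<union> E}. (-1::complex) ^ card E) = 0"
      using alt_sum_zero[OF fE0, of "Y \<inter> E0"] by auto
    then show "(\<Sum>E\<in>{E\<in>Pow E0. Y \<subseteq> A \<union> E}. (-1::complex) ^ card E) * \<psi> Y = 0" by simp
  qed
  finally show ?thesis .
qed




lemma Kf_up_many:
  assumes dl: "d \<le> Suc r" and van: "\<forall>B\<in>matchs n m (Suc r). Kf d \<psi> B = 0"
  shows "\<forall>B\<in>matchs n m (Suc r + k). Kf d \<psi> B = 0"
proof (induction k)
  case 0 then show ?case using van by simp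
next
  case (Suc k)
  have "d \<le> Suc r + k" using dl by simp
  from Kf_up[OF this Suc.IH] show ?case by simp
qed

lemma Kf_down:
  assumes dr: "d \<le> r" and rn: "r + d + 1 \<le> n" and rm: "r + d + 1 \<le> m"
    and van: "\<forall>B\<in>matchs n m (Suc r). Kf d \<psi> B = 0"
  shows "\<forall>A\<in>matchs n m r. Kf d \<psi> A = 0"
proof
  fix A assume A: "A \<in> matchs n m r"
  have fA: "finite A" using A matchs_finite by blast
  have subA: "A \<subseteq> {..<n} \<times> {..<m}" and cA: "card A = r" and naA: "nonatt A"
    using A by (auto simp: matchs_def)
  have up: "\<forall>B\<in>matchs n m (Suc r + k). Kf d \<psi> B = 0" for k
    using Kf_up_many[OF _ van] dr by simp
  define FR where "FR = {..<n} - fst ` A"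
  define FC where "FC = {..<m} - snd ` A"
  have "card (fst ` A) \<le> r" using card_image_le[OF fA, of fst] cA by simp
  moreover have "fst ` A \<subseteq> {..<n}" using subA by auto
  ultimately have "card FR \<ge> Suc d" unfolding FR_def using rn
    by (simp add: card_Diff_subset finite_subset)
  then obtain R where R: "R \<subseteq> FR" "card R = Suc d" "finite R" by (meson obtain_subset_with_card_n)
  have "card (snd ` A) \<le> r" using card_image_le[OF fA, of snd] cA by simp
  moreover have "snd ` A \<subseteq> {..<m}" using subA by auto
  ultimately have "card FC \<ge> Suc d" unfolding FC_def using rm
    by (simp add: card_Diff_subset finite_subset)
  then obtain C where C: "C \<subseteq> FC" "card C = Suc d" "finite C" by (meson obtain_subset_with_card_n)
  obtain f where f: "bij_betw f R C" using finite_same_card_bij[OF R(3) C(3)] R(2) C(2) by auto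
  define E0 where "E0 = (\<lambda>i. (i, f i)) ` R"
  have injE: "inj_on (\<lambda>i. (i, f i)) R" by (auto simp: inj_on_def)
  have cE0: "card E0 = Suc d" unfolding E0_def using card_image[OF injE] R(2) by simp
  have fE0: "finite E0" unfolding E0_def using R(3) by simp
  have fR: "\<And>i. i \<in> R \<Longrightarrow> f i \<in> C" using f by (auto simp: bij_betw_def)
  have finj: "\<And>i i'. i \<in> R \<Longrightarrow> i' \<in> R \<Longrightarrow> f i = f i' \<Longrightarrow> i = i'"
    using f by (auto simp: bij_betw_def inj_on_def)
  have disj: "A \<inter> E0 = {}"
  proof -
    have "(i, f i) \<notin> A" if "i \<in> R" for i
    proof
      assume "(i, f i) \<in> A"
      then have "i \<in> fst ` A" by force
      then show False using that R(1) by (auto simp: FR_def)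
    qed
    then show ?thesis unfolding E0_def by auto
  qed
  have mE: "A \<union> E \<in> matchs n m (r + card E)" if E: "E \<subseteq> E0" for E
  proof -
    have fE: "finite E" using E fE0 finite_subset by blast
    have "E0 \<subseteq> {..<n} \<times> {..<m}" unfolding E0_def using R(1) C(1) fR by (auto simp: FR_def FC_def)
    then have sub: "A \<union> E \<subseteq> {..<n} \<times> {..<m}" using subA E by auto
    have card: "card (A \<union> E) = r + card E" using card_Un_disjoint[OF fA fE] disj E cA by auto
    have na: "nonatt (A \<union> E)" unfolding nonatt_def
    proof (intro ballI impI)
      fix x y assume x: "x \<in> A \<union> E" and y: "y \<in> A \<union> E" and xy: "fst x = fst y \<or> snd x = snd y"
      have inE: "\<exists>i\<in>R. z = (i, f i)" if "z \<in> E" for z using that E by (auto simp: E0_def)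
      have freeE: "fst z \<notin> fst ` A \<and> snd z \<notin> snd ` A" if zE: "z \<in> E" for z
      proof -
        obtain i where i: "i \<in> R" "z = (i, f i)" using inE[OF zE] by blast
        then show ?thesis using R(1) C(1) fR[OF i(1)] by (auto simp: FR_def FC_def)
      qed
      show "x = y"
      proof (cases "x \<in> A")
        case xA: True
        show ?thesis
        proof (cases "y \<in> A")
          case True then show ?thesis using xA xy naA by (auto simp: nonatt_def)
        next
          case False
          then have "y \<in> E" using y by auto
          then show ?thesis using freeE xA xy by (metis image_eqI)
        qed
      next
        case xnA: False
        then have xE: "x \<in> E" using x by auto
        show ?thesis
        proof (cases "y \<in> A")
          case True then show ?thesis using freeE[OF xE] xy by (metis image_eqI)
        next
          case False
          then have yE: "y \<in> E" using y by auto
          obtain i where i: "i \<in> R" "x = (i, f i)" using inE[OF xE] by blast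
          obtain i' where i': "i' \<in> R" "y = (i', f i')" using inE[OF yE] by blast
          show ?thesis using xy i i' finj by auto
        qed
      qed
    qed
    show ?thesis using sub card na by (simp add: matchs_def)
  qed
  have zero: "Kf d \<psi> (A \<union> E) = 0" if "E \<in> Pow E0 - {{}}" for E
  proof -
    have E: "E \<subseteq> E0" "E \<noteq> {}" using that by auto
    have fE: "finite E" using E fE0 finite_subset by blast
    have "card E \<ge> 1" using E fE by (simp add: Suc_le_eq card_gt_0_iff)
    then have "r + card E = Suc r + (card E - 1)" by simp
    then show ?thesis using up[of "card E - 1"] mE[OF E(1)] by simp
  qed
  have "(\<Sum>E\<in>Pow E0. (-1::complex) ^ card E * Kf d \<psi> (A \<union> E)) = 0"
    by (rule finite_difference[OF fA fE0 disj cE0])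
  moreover have "(\<Sum>E\<in>Pow E0. (-1::complex) ^ card E * Kf d \<psi> (A \<union> E))
     = (-1::complex) ^ card ({}::(nat\<times>nat) set) * Kf d \<psi> (A \<union> {}) + (\<Sum>E\<in>Pow E0 - {{}}. (-1::complex) ^ card E * Kf d \<psi> (A \<union> E))"
    by (rule sum.remove) (use fE0 in auto)
  moreover have "(\<Sum>E\<in>Pow E0 - {{}}. (-1::complex) ^ card E * Kf d \<psi> (A \<union> E)) = 0"
    using zero by simp
  ultimately show "Kf d \<psi> A = 0" by simp
qed




definition tr :: "nat \<Rightarrow> nat \<Rightarrow> nat \<Rightarrow> ((nat \<times> nat) set \<Rightarrow> complex) \<Rightarrow> (nat \<times> nat) set \<Rightarrow> complex" where
  "tr d l l' c S = c S * beta d l' S / beta d l S"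

lemma psi_tr:
  assumes "d \<le> l" "d \<le> l'" "\<forall>S. d < card S \<longrightarrow> c S = 0"
  shows "psi d l' (tr d l l' c) = psi d l c"
proof
  fix Y
  show "psi d l' (tr d l l' c) Y = psi d l c Y"
    unfolding psi_def
  proof (rule sum.cong)
    fix S
    show "tr d l l' c S / beta d l' S = c S / beta d l S"
    proof (cases "card S \<le> d")
      case True
      then show ?thesis using beta_nz[OF assms(2) True] by (simp add: tr_def)
    next
      case False then show ?thesis using assms(3) by (simp add: tr_def)
    qed
  qed simp
qed

lemma tr_d: "card S = d \<Longrightarrow> tr d l l' c S = c S"
  by (simp add: tr_def beta_def)

lemma tr_supp: "c S = 0 \<Longrightarrow> tr d l l' c S = 0"
  by (simp add: tr_def)

definition Ok :: "nat \<Rightarrow> nat \<Rightarrow> nat \<Rightarrow> ((nat \<times> nat) set \<Rightarrow> complex) \<Rightarrow> bool" where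
  "Ok n m l c \<longleftrightarrow> (\<forall>B\<in>matchs n m l. ev c B = 0)"

lemma Ok_Kf:
  assumes "d \<le> l" "\<forall>S. d < card S \<longrightarrow> c S = 0"
  shows "Ok n m l c \<longleftrightarrow> (\<forall>B\<in>matchs n m l. Kf d (psi d l c) B = 0)"
proof -
  have eq: "ev c B = Kf d (psi d l c) B" if "B \<in> matchs n m l" for B
  proof -
    have "finite B" using that matchs_finite by blast
    moreover have "card B = l" using that by (simp add: matchs_def)
    ultimately show ?thesis using ev_Kf[OF _ _ assms(1) assms(2)] by blast
  qed
  show ?thesis unfolding Ok_def using eq by simp
qed




lemma kap_supp:
  assumes "p \<in> hom_piece n m d" "d < card S"
  shows "kap p S = 0"
proof -
  have emp: "{t\<in>Poly_Mapping.keys p. Poly_Mapping.keys t = S} = {}"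
  proof (rule ccontr)
    assume "{t\<in>Poly_Mapping.keys p. Poly_Mapping.keys t = S} \<noteq> {}"
    then obtain t where t: "t \<in> Poly_Mapping.keys p" "Poly_Mapping.keys t = S" by blast
    then have "card S \<le> tdeg t" using card_keys_le_tdeg[of t] by simp
    moreover have "tdeg t = d" using assms(1) t(1) by (simp add: hom_piece_def homogeneous_of_def)
    ultimately show False using assms(2) by simp
  qed
  show ?thesis unfolding kap_def emp by simp
qed

lemma lowB_iff_c:
  assumes hp: "p \<in> hom_piece n m d"
  shows "lowB n m l d p \<longleftrightarrow> (\<exists>c. (\<forall>S. card S = d \<longrightarrow> c S = kap p S) \<and> (\<forall>S. d < card S \<longrightarrow> c S = 0) \<and> Ok n m l c)"
proof
  assume "lowB n m l d p"
  then obtain b where b: "\<forall>S. d \<le> card S \<longrightarrow> b S = 0" "\<forall>B\<in>matchs n m l. ev (kap p) B = ev b B"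
    by (auto simp: lowB_def)
  define c where "c = (\<lambda>S. kap p S - b S)"
  have "ev c B = ev (kap p) B - ev b B" for B unfolding c_def ev_def by (simp add: sum_subtractf)
  then have "Ok n m l c" using b(2) by (simp add: Ok_def)
  moreover have "\<forall>S. card S = d \<longrightarrow> c S = kap p S" using b(1) by (simp add: c_def)
  moreover have "\<forall>S. d < card S \<longrightarrow> c S = 0" using b(1) kap_supp[OF hp] by (simp add: c_def)
  ultimately show "\<exists>c. (\<forall>S. card S = d \<longrightarrow> c S = kap p S) \<and> (\<forall>S. d < card S \<longrightarrow> c S = 0) \<and> Ok n m l c"
    by blast
next
  assume "\<exists>c. (\<forall>S. card S = d \<longrightarrow> c S = kap p S) \<and> (\<forall>S. d < card S \<longrightarrow> c S = 0) \<and> Ok n m l c"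
  then obtain c where c: "\<forall>S. card S = d \<longrightarrow> c S = kap p S" "\<forall>S. d < card S \<longrightarrow> c S = 0" "Ok n m l c"
    by blast
  define b where "b = (\<lambda>S. if card S < d then kap p S - c S else 0)"
  have pw: "kap p S - b S = c S" for S
  proof -
    consider "card S < d" | "card S = d" | "d < card S" by linarith
    then show ?thesis
      by cases (use c(1,2) kap_supp[OF hp, of S] in \<open>auto simp: b_def\<close>)
  qed
  have evd: "ev (kap p) B - ev b B = ev c B" for B unfolding ev_def
    by (simp add: sum_subtractf[symmetric] pw)
  have "\<forall>B\<in>matchs n m l. ev (kap p) B = ev b B"
  proof
    fix B assume "B \<in> matchs n m l"
    then have "ev c B = 0" using c(3) by (simp add: Ok_def)
    then have "ev (kap p) B - ev b B = 0" using evd[of B] by simp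
    then show "ev (kap p) B = ev b B" by simp
  qed
  moreover have "\<forall>S. d \<le> card S \<longrightarrow> b S = 0" by (simp add: b_def)
  ultimately show "lowB n m l d p" unfolding lowB_def by blast
qed

lemma lowB_equiv:
  assumes hp: "p \<in> hom_piece n m d" and dr: "d \<le> r" and rn: "r + d + 1 \<le> n" and rm: "r + d + 1 \<le> m"
  shows "lowB n m r d p \<longleftrightarrow> lowB n m (Suc r) d p"
proof
  assume "lowB n m r d p"
  then obtain c where c: "\<forall>S. card S = d \<longrightarrow> c S = kap p S" "\<forall>S. d < card S \<longrightarrow> c S = 0" "Ok n m r c"
    using lowB_iff_c[OF hp] by blast
  define c' where "c' = tr d r (Suc r) c"
  have c'1: "\<forall>S. card S = d \<longrightarrow> c' S = kap p S" using c(1) tr_d by (simp add: c'_def)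
  have c'2: "\<forall>S. d < card S \<longrightarrow> c' S = 0" using c(2) tr_supp by (simp add: c'_def)
  have ps: "psi d (Suc r) c' = psi d r c" unfolding c'_def by (rule psi_tr) (use dr c(2) in auto)
  have "\<forall>B\<in>matchs n m r. Kf d (psi d r c) B = 0" using Ok_Kf[OF dr c(2)] c(3) by blast
  then have "\<forall>B\<in>matchs n m (Suc r). Kf d (psi d r c) B = 0" by (rule Kf_up[OF dr])
  then have "Ok n m (Suc r) c'" using Ok_Kf[of d "Suc r" c'] c'2 dr ps by simp
  then show "lowB n m (Suc r) d p" using lowB_iff_c[OF hp] c'1 c'2 by blast
next
  assume "lowB n m (Suc r) d p"
  then obtain c where c: "\<forall>S. card S = d \<longrightarrow> c S = kap p S" "\<forall>S. d < card S \<longrightarrow> c S = 0" "Ok n m (Suc r) c"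
    using lowB_iff_c[OF hp] by blast
  define c' where "c' = tr d (Suc r) r c"
  have c'1: "\<forall>S. card S = d \<longrightarrow> c' S = kap p S" using c(1) tr_d by (simp add: c'_def)
  have c'2: "\<forall>S. d < card S \<longrightarrow> c' S = 0" using c(2) tr_supp by (simp add: c'_def)
  have ps: "psi d r c' = psi d (Suc r) c" unfolding c'_def by (rule psi_tr) (use dr c(2) in auto)
  have dsr: "d \<le> Suc r" using dr by simp
  have "\<forall>B\<in>matchs n m (Suc r). Kf d (psi d (Suc r) c) B = 0" using Ok_Kf[OF dsr c(2)] c(3) by blast
  then have "\<forall>B\<in>matchs n m r. Kf d (psi d (Suc r) c) B = 0" by (rule Kf_down[OF dr rn rm])
  then have "Ok n m r c'" using Ok_Kf[of d r c'] c'2 dr ps by simp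
  then show "lowB n m r d p" using lowB_iff_c[OF hp] c'1 c'2 by blast
qed

theorem mainTheorem18:
  fixes n m r d :: nat
  assumes "0 < n" and "0 < m"
    and "d \<le> r" and "r < min m n"
    and "d \<le> min m n - r - 1"
  shows "Rd_iso n m d (Zset n m r) (Zset n m (r + 1))"
proof -
  have rn: "r + d + 1 \<le> n" and rm: "r + d + 1 \<le> m" using assms by auto
  have key: "p \<in> gr_ideal n m (Zset n m (r + 1)) \<longleftrightarrow> p \<in> gr_ideal n m (Zset n m r)"
    if hp: "p \<in> hom_piece n m d" for p
  proof -
    have "p \<in> gr_ideal n m (Zset n m r) \<longleftrightarrow> lowrep n m (Zset n m r) d p"
      using gr_imp_lowrep[OF hp] lowrep_imp_gr[OF hp] by blast
    moreover have "p \<in> gr_ideal n m (Zset n m (Suc r)) \<longleftrightarrow> lowrep n m (Zset n m (Suc r)) d p"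
      using gr_imp_lowrep[OF hp] lowrep_imp_gr[OF hp] by blast
    ultimately show ?thesis
      using lowB_equiv[OF hp assms(3) rn rm] lowrep_iff_lowB by simp
  qed
  have z: "(0::cpoly) \<in> gr_ideal n m Z" for Z by (simp add: gr_ideal_def ideal_gen.zero)
  have surj: "\<forall>q\<in>hom_piece n m d. \<exists>p\<in>hom_piece n m d. p - q \<in> gr_ideal n m (Zset n m (r + 1))"
  proof
    fix q assume "q \<in> hom_piece n m d"
    moreover have "q - q \<in> gr_ideal n m (Zset n m (r + 1))" using z by simp
    ultimately show "\<exists>p\<in>hom_piece n m d. p - q \<in> gr_ideal n m (Zset n m (r + 1))" by blast
  qed
  have eqv: "\<forall>p\<in>hom_piece n m d. p \<in> gr_ideal n m (Zset n m (r + 1)) \<longleftrightarrow> p \<in> gr_ideal n m (Zset n m r)"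
    using key by blast
  have gz: "\<forall>g h. g permutes {..<n} \<longrightarrow> h permutes {..<m} \<longrightarrow>
            (\<forall>p\<in>hom_piece n m d. gact g h p - gact g h p \<in> gr_ideal n m (Zset n m (r + 1)))"
    using z by simp
  show ?thesis
    unfolding Rd_iso_def Let_def
  proof (rule exI[of _ "\<lambda>p. p"], intro conjI)
    show "\<forall>p\<in>hom_piece n m d. p \<in> hom_piece n m d" by blast
    show "\<forall>p\<in>hom_piece n m d. \<forall>q\<in>hom_piece n m d. p + q = p + q" by blast
    show "\<forall>c. \<forall>p\<in>hom_piece n m d. cscale c p = cscale c p" by blast
    show "\<forall>p\<in>hom_piece n m d. p \<in> gr_ideal n m (Zset n m (r + 1)) \<longleftrightarrow> p \<in> gr_ideal n m (Zset n m r)"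
      by (rule eqv)
    show "\<forall>q\<in>hom_piece n m d. \<exists>p\<in>hom_piece n m d. p - q \<in> gr_ideal n m (Zset n m (r + 1))"
      by (rule surj)
    show "\<forall>g h. g permutes {..<n} \<longrightarrow> h permutes {..<m} \<longrightarrow>
            (\<forall>p\<in>hom_piece n m d. gact g h p - gact g h p \<in> gr_ideal n m (Zset n m (r + 1)))"
      by (rule gz)
  qed
qed



end
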